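(* Let $\mathcal{V}$ be a set of $n\ge 2$ vertices, let $\mathcal{C}$ be a fixed partition of $\mathcal{V}$ into communities, and let $Q_a(\mathcal{C})$ denote, for an attributed graph $G$ on vertex set $\mathcal{V}$, the modularity of $\mathcal{C}$ in the auxiliary graph $G_a$ of $G$ (defined in the context). Then every attributed graph $G$ on $\mathcal{V}$ satisfies $$LS_{Q_a(\mathcal{C})}(G)=\max_{G'\sim_{at}G}\bigl|Q_a(\mathcal{C})(G)-Q_a(\mathcal{C})(G')\bigr|\le \frac{60}{n}.$$
   Context: An attributed graph is a triple $G=(\mathcal{V},\mathcal{E},X)$ with $\mathcal{V}=\{v_1,\dots,v_n\}$, $\mathcal{E}$ a set of undirected edges, and $X$ a binary $n\times k$ matrix whose $i$-th row $\tau(v_i)\in\{0,1\}^k$ is the attribute vector of $v_i$. Two attributed graphs $G=(\mathcal{V},\mathcal{E},X)$ and $G'=(\mathcal{V},\mathcal{E}',X')$ on the same vertex set are neighbouring, $G\sim_{at}G'$, iff either $|\mathcal{E}\,\triangle\,\mathcal{E}'|=1$ (and the attributes coincide), or they have the same edges and differ in the attribute vector of exactly one vertex. For a graph $H$ with $m\ge1$ edges and a partition $\mathcal{C}$ of its vertices, the modularity is $\sum_{C\in\mathcal{C}}\bigl(\frac{\ell_C}{m}-(\frac{d_C}{2m})^2\bigr)$, where $\ell_C$ is the number of edges with both ends in $C$ and $d_C$ the sum of degrees of the vertices of $C$. The auxiliary graph $G_a$ of an attributed graph $G$ has vertex set $\mathcal{V}$ and its edges are the $\lceil n(n-1)/20\rceil$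 pairs of distinct vertices whose attribute vectors have the largest cosine similarity (ties broken by a fixed rule). The local sensitivity $LS_q(G)$ of a real-valued query $q$ at $G$ is $\max_{G'\sim_{at}G}|q(G)-q(G')|$. *)

theory Defs
  imports Complex_Main "HOL-Library.Disjoint_Sets"
begin

definition pairs :: "'v set \<Rightarrow> 'v set set" where
  "pairs V = {e. e \<subseteq> V \<and> card e = 2}"

text \<open>An attributed graph on V with k binary attributes: edge set E and attribute
  map X, where X v i is the i-th attribute of v (i < k); junk values are fixed to False.\<close>
definition attr_graph :: "'v set \<Rightarrow> nat \<Rightarrow> 'v set set \<Rightarrow> ('v \<Rightarrow> nat \<Rightarrow> bool) \<Rightarrow> bool" where
  "attr_graph V k E X \<longleftrightarrow> E \<subseteq> pairs V \<and> (\<forall>v i. (v \<notin> V \<or> k \<le> i) \<longrightarrow> \<not> X v i)"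

text \<open>Cosine similarity of the binary attribute vectors of u and v
  (equal to 0 if one of them is the zero vector, since x / 0 = 0).\<close>
definition cos_sim :: "nat \<Rightarrow> ('v \<Rightarrow> nat \<Rightarrow> bool) \<Rightarrow> 'v \<Rightarrow> 'v \<Rightarrow> real" where
  "cos_sim k X u v =
     real (card {i\<in>{..<k}. X u i \<and> X v i}) /
       (sqrt (real (card {i\<in>{..<k}. X u i})) * sqrt (real (card {i\<in>{..<k}. X v i})))"

definition pair_sim :: "nat \<Rightarrow> ('v \<Rightarrow> nat \<Rightarrow> bool) \<Rightarrow> 'v set \<Rightarrow> real" where
  "pair_sim k X e =
     (let u = (SOME u. u \<in> e); w = (SOME w. w \<in> e \<and> w \<noteq> u) in cos_sim k X u w)"

definition aux_size :: "nat \<Rightarrow> nat" where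
  "aux_size n = nat \<lceil>real (n * (n - 1)) / 20\<rceil>"

text \<open>Auxiliary graph: the aux_size n pairs of largest cosine similarity; ties are broken
  by a fixed injective ranking rk of the pairs (smaller rank wins).\<close>
definition aux_edges :: "'v set \<Rightarrow> nat \<Rightarrow> ('v set \<Rightarrow> nat) \<Rightarrow> ('v \<Rightarrow> nat \<Rightarrow> bool) \<Rightarrow> 'v set set" where
  "aux_edges V k rk X =
     {e \<in> pairs V. card {f \<in> pairs V. pair_sim k X f > pair_sim k X e \<or>
                       (pair_sim k X f = pair_sim k X e \<and> rk f < rk e)} < aux_size (card V)}"

definition degree :: "'v set set \<Rightarrow> 'v \<Rightarrow> nat" where
  "degree E v = card {e \<in> E. v \<in> e}"

definition modularity :: "'v set set \<Rightarrow> 'v set set \<Rightarrow> real" where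
  "modularity E C =
     (\<Sum>c\<in>C. real (card {e \<in> E. e \<subseteq> c}) / real (card E)
              - (real (\<Sum>v\<in>c. degree E v) / (2 * real (card E)))^2)"

definition Q_aux :: "'v set \<Rightarrow> nat \<Rightarrow> ('v set \<Rightarrow> nat) \<Rightarrow> 'v set set
                     \<Rightarrow> 'v set set \<times> ('v \<Rightarrow> nat \<Rightarrow> bool) \<Rightarrow> real" where
  "Q_aux V k rk C G = modularity (aux_edges V k rk (snd G)) C"

definition neighbouring :: "'v set \<Rightarrow> nat \<Rightarrow> 'v set set \<times> ('v \<Rightarrow> nat \<Rightarrow> bool)
                              \<Rightarrow> 'v set set \<times> ('v \<Rightarrow> nat \<Rightarrow> bool) \<Rightarrow> bool" where
  "neighbouring V k G G' \<longleftrightarrow>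
     attr_graph V k (fst G) (snd G) \<and> attr_graph V k (fst G') (snd G') \<and>
     ((card ((fst G - fst G') \<union> (fst G' - fst G)) = 1 \<and> snd G = snd G') \<or>
      (fst G = fst G' \<and> (\<exists>v\<in>V. snd G' v \<noteq> snd G v \<and> (\<forall>u. u \<noteq> v \<longrightarrow> snd G' u = snd G u))))"

definition local_sensitivity :: "('g \<Rightarrow> real) \<Rightarrow> ('g \<Rightarrow> 'g \<Rightarrow> bool) \<Rightarrow> 'g \<Rightarrow> real" where
  "local_sensitivity q nbr G = Sup {\<bar>q G - q G'\<bar> | G'. nbr G G'}"

end

theory Submission
  imports Defs
begin


definition beat :: "('a \<Rightarrow> real) \<Rightarrow> ('a \<Rightarrow> nat) \<Rightarrow> 'a \<Rightarrow> 'a \<Rightarrow> bool" where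
  "beat s rk f e \<longleftrightarrow> s f > s e \<or> (s f = s e \<and> rk f < rk e)"

definition pos :: "('a \<Rightarrow> real) \<Rightarrow> ('a \<Rightarrow> nat) \<Rightarrow> 'a set \<Rightarrow> 'a \<Rightarrow> nat" where
  "pos s rk S e = card {f\<in>S. beat s rk f e}"

lemma beat_trans: "beat s rk f e \<Longrightarrow> beat s rk g f \<Longrightarrow> beat s rk g e"
  unfolding beat_def by auto

lemma beat_irrefl: "\<not> beat s rk e e"
  unfolding beat_def by auto

lemma beat_total: "inj_on rk S \<Longrightarrow> e \<in> S \<Longrightarrow> f \<in> S \<Longrightarrow> e \<noteq> f \<Longrightarrow> beat s rk e f \<or> beat s rk f e"
proof -
  assume a: "inj_on rk S" "e \<in> S" "f \<in> S" "e \<noteq> f"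
  then have "rk e \<noteq> rk f" unfolding inj_on_def by blast
  then show ?thesis unfolding beat_def by linarith
qed

lemma pos_mono:
  assumes "finite S" "e \<in> S" "f \<in> S" "beat s rk f e"
  shows "pos s rk S f < pos s rk S e"
proof -
  have "{g\<in>S. beat s rk g f} \<subset> {g\<in>S. beat s rk g e}"
  proof
    show "{g\<in>S. beat s rk g f} \<subseteq> {g\<in>S. beat s rk g e}"
      using beat_trans[OF assms(4)] by blast
    show "{g\<in>S. beat s rk g f} \<noteq> {g\<in>S. beat s rk g e}"
      using assms(3,4) beat_irrefl[of s rk f] by blast
  qed
  then show ?thesis unfolding pos_def using assms(1) by (simp add: psubset_card_mono)
qed

lemma pos_inj:
  assumes "finite S" "inj_on rk S"
  shows "inj_on (pos s rk S) S"
proof (rule inj_onI, rule ccontr)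
  fix e f assume "e \<in> S" "f \<in> S" "pos s rk S e = pos s rk S f" "e \<noteq> f"
  have "beat s rk e f \<or> beat s rk f e" using beat_total[OF assms(2) \<open>e\<in>S\<close> \<open>f\<in>S\<close> \<open>e\<noteq>f\<close>] .
  then show False
  proof
    assume "beat s rk e f"
    from pos_mono[OF assms(1) \<open>f\<in>S\<close> \<open>e\<in>S\<close> this] show False using \<open>pos s rk S e = pos s rk S f\<close> by simp
  next
    assume "beat s rk f e"
    from pos_mono[OF assms(1) \<open>e\<in>S\<close> \<open>f\<in>S\<close> this] show False using \<open>pos s rk S e = pos s rk S f\<close> by simp
  qed
qed

lemma pos_lt:
  assumes "finite S" "e \<in> S"
  shows "pos s rk S e < card S"
proof -
  have "{f\<in>S. beat s rk f e} \<subset> S" using assms beat_irrefl[of s rk e] by blast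
  then show ?thesis unfolding pos_def using assms(1) by (simp add: psubset_card_mono)
qed

lemma pos_image:
  assumes "finite S" "inj_on rk S"
  shows "pos s rk S ` S = {..<card S}"
proof -
  have h1: "pos s rk S ` S \<subseteq> {..<card S}" using pos_lt[OF assms(1)] by (simp add: image_subset_iff)
  have h2: "card (pos s rk S ` S) = card {..<card S}"
    using card_image[OF pos_inj[OF assms]] by (simp only: card_lessThan)
  show ?thesis by (rule card_subset_eq[OF finite_lessThan h1 h2])
qed

lemma card_sel:
  assumes "finite S" "inj_on rk S" "m \<le> card S"
  shows "card {e\<in>S. pos s rk S e < m} = m"
proof -
  have im: "pos s rk S ` {e\<in>S. pos s rk S e < m} = {..<m}"
  proof
    show "pos s rk S ` {e\<in>S. pos s rk S e < m} \<subseteq> {..<m}" by auto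
    show "{..<m} \<subseteq> pos s rk S ` {e\<in>S. pos s rk S e < m}"
    proof
      fix i assume "i \<in> {..<m}"
      then have "i \<in> pos s rk S ` S" using pos_image[OF assms(1,2), of s] assms(3) by auto
      then obtain e where "e \<in> S" "i = pos s rk S e" by (rule imageE) simp
      then show "i \<in> pos s rk S ` {e\<in>S. pos s rk S e < m}" using \<open>i \<in> {..<m}\<close> by simp
    qed
  qed
  have inj: "inj_on (pos s rk S) {e\<in>S. pos s rk S e < m}"
    by (rule inj_on_subset[OF pos_inj[OF assms(1,2)]]) simp
  show ?thesis using card_image[OF inj] unfolding im by simp
qed

lemma sel_down:
  assumes "finite S" "e \<in> S" "f \<in> S" "beat s rk f e" "pos s rk S e < m"
  shows "pos s rk S f < m"
  using pos_mono[OF assms(1-4)] assms(5) by simp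



lemma pairs_card: "e \<in> pairs V \<Longrightarrow> card e = 2"
  unfolding pairs_def by simp

lemma pairs_sub: "e \<in> pairs V \<Longrightarrow> e \<subseteq> V"
  unfolding pairs_def by simp

lemma pairs_finite: "finite V \<Longrightarrow> finite (pairs V)"
  unfolding pairs_def by simp

lemma deg_sum:
  assumes "finite c" "finite F"
  shows "(\<Sum>v\<in>c. degree F v) = (\<Sum>e\<in>F. card (e \<inter> c))"
proof -
  have "(\<Sum>v\<in>c. degree F v) = (\<Sum>v\<in>c. \<Sum>e\<in>F. if v \<in> e then 1 else 0)"
    unfolding degree_def using assms(2) by (simp add: sum.If_cases Int_def)
  also have "\<dots> = (\<Sum>e\<in>F. \<Sum>v\<in>c. if v \<in> e then 1 else 0)"
    by (rule sum.swap)
  also have "\<dots> = (\<Sum>e\<in>F. card (e \<inter> c))"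
    using assms(1) by (simp add: sum.If_cases Int_commute)
  finally show ?thesis .
qed

lemma card_split_partition:
  assumes "partition_on V C" "finite V" "e \<subseteq> V"
  shows "(\<Sum>c\<in>C. card (e \<inter> c)) = card e"
proof -
  have fC: "finite C" using finite_elements[OF assms(2,1)] .
  have "e = (\<Union>c\<in>C. e \<inter> c)" using assms(1,3) unfolding partition_on_def by blast
  moreover have "card (\<Union>c\<in>C. e \<inter> c) = (\<Sum>c\<in>C. card (e \<inter> c))"
  proof (rule card_UN_disjoint[OF fC])
    show "\<forall>i\<in>C. finite (e \<inter> i)" using assms(2,3) finite_subset by blast
    show "\<forall>i\<in>C. \<forall>j\<in>C. i \<noteq> j \<longrightarrow> e \<inter> i \<inter> (e \<inter> j) = {}"
      using assms(1) unfolding partition_on_def disjoint_def by blast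
  qed
  ultimately show ?thesis by simp
qed

lemma L_sum_le:
  assumes "partition_on V C" "finite V" "F \<subseteq> pairs V"
  shows "(\<Sum>c\<in>C. card {e\<in>F. e \<subseteq> c}) \<le> card F"
proof -
  have fC: "finite C" using finite_elements[OF assms(2,1)] .
  have fF: "finite F" using assms(2,3) pairs_finite finite_subset by blast
  have "card (\<Union>c\<in>C. {e\<in>F. e \<subseteq> c}) = (\<Sum>c\<in>C. card {e\<in>F. e \<subseteq> c})"
  proof (rule card_UN_disjoint[OF fC])
    show "\<forall>i\<in>C. finite {e\<in>F. e \<subseteq> i}" using fF by simp
    show "\<forall>i\<in>C. \<forall>j\<in>C. i \<noteq> j \<longrightarrow> {e\<in>F. e \<subseteq> i} \<inter> {e\<in>F. e \<subseteq> j} = {}"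
    proof (intro ballI impI)
      fix i j assume ij: "i \<in> C" "j \<in> C" "i \<noteq> j"
      have dj: "i \<inter> j = {}" using assms(1) ij unfolding partition_on_def disjoint_def by blast
      show "{e\<in>F. e \<subseteq> i} \<inter> {e\<in>F. e \<subseteq> j} = {}"
      proof (rule ccontr)
        assume "{e\<in>F. e \<subseteq> i} \<inter> {e\<in>F. e \<subseteq> j} \<noteq> {}"
        then obtain e where "e \<in> F" "e \<subseteq> i" "e \<subseteq> j" by blast
        moreover have "card e = 2" using \<open>e \<in> F\<close> assms(3) pairs_card by blast
        moreover have "e = {}" using \<open>e \<subseteq> i\<close> \<open>e \<subseteq> j\<close> dj by blast
        ultimately show False by simp
      qed
    qed
  qed
  moreover have "card (\<Union>c\<in>C. {e\<in>F. e \<subseteq> c}) \<le> card F"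
    by (rule card_mono[OF fF]) blast
  ultimately show ?thesis by simp
qed

lemma D_sum:
  assumes "partition_on V C" "finite V" "F \<subseteq> pairs V"
  shows "(\<Sum>c\<in>C. \<Sum>e\<in>F. card (e \<inter> c)) = 2 * card F"
proof -
  have "(\<Sum>c\<in>C. \<Sum>e\<in>F. card (e \<inter> c)) = (\<Sum>e\<in>F. \<Sum>c\<in>C. card (e \<inter> c))"
    by (rule sum.swap)
  also have "\<dots> = (\<Sum>e\<in>F. 2)"
  proof (rule sum.cong[OF refl])
    fix e assume "e \<in> F"
    then have "e \<in> pairs V" using assms(3) by blast
    then show "(\<Sum>c\<in>C. card (e \<inter> c)) = 2"
      using card_split_partition[OF assms(1,2) pairs_sub[OF \<open>e \<in> pairs V\<close>]] pairs_card[OF \<open>e \<in> pairs V\<close>] by simp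
  qed
  finally show ?thesis by simp
qed

lemma alg_id:
  fixes m k a b d p q :: real
  assumes "m > 0"
  shows "((k + a) / m - ((d + p) / (2 * m))^2) - ((k + b) / m - ((d + q) / (2 * m))^2)
     = (a - b) / m - (p * ((d + p) + (d + q)) - q * ((d + p) + (d + q))) / (4 * m^2)"
proof -
  have "((d + p) / (2 * m))^2 - ((d + q) / (2 * m))^2 = ((d + p)^2 - (d + q)^2) / (4 * m^2)"
    using assms by (simp add: power_divide power_mult_distrib diff_divide_distrib)
  moreover have "(d + p)^2 - (d + q)^2 = p * ((d + p) + (d + q)) - q * ((d + p) + (d + q))"
    by (simp add: power2_eq_square algebra_simps)
  moreover have "(k + a) / m - (k + b) / m = (a - b) / m" using assms by (simp add: field_simps)
  ultimately show ?thesis by (simp add: algebra_simps)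
qed

lemma mod_diff:
  fixes V :: "'a set"
  assumes V: "finite V" and P: "partition_on V C" and E: "E \<subseteq> pairs V" "E' \<subseteq> pairs V"
    and m: "card E = m" "card E' = m" "m > 0" and t: "card (E - E') \<le> t"
  shows "\<bar>modularity E C - modularity E' C\<bar> \<le> 3 * real t / real m"
proof -
  have fC: "finite C" using finite_elements[OF V P] .
  have fc: "finite c" if "c \<in> C" for c
  proof -
    have "c \<subseteq> V" using P that unfolding partition_on_def by blast
    then show ?thesis using V by (rule finite_subset)
  qed
  have fE: "finite E" "finite E'" using V E pairs_finite finite_subset by blast+
  define K where "K = E \<inter> E'"
  define R where "R = E - E'"
  define A where "A = E' - E"
  have EKR: "E = K \<union> R" "K \<inter> R = {}" unfolding K_def R_def by blast+
  have EKA: "E' = K \<union> A" "K \<inter> A = {}" unfolding K_def A_def by blast+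
  have fKRA: "finite K" "finite R" "finite A" using fE unfolding K_def R_def A_def by auto
  have RAsub: "R \<subseteq> pairs V" "A \<subseteq> pairs V" using E unfolding R_def A_def by blast+
  define r where "r = card R"
  have cardA: "card A = r"
  proof -
    have "card R = card E - card K" unfolding R_def K_def using fE by (simp add: card_Diff_subset_Int)
    moreover have "card A = card E' - card K" unfolding A_def K_def using fE
      by (simp add: card_Diff_subset_Int Int_commute)
    ultimately show ?thesis using m r_def by simp
  qed
  have rt: "r \<le> t" using t unfolding r_def R_def .
  define L :: "'a set set \<Rightarrow> 'a set \<Rightarrow> real" where "L F c = real (card {e\<in>F. e \<subseteq> c})" for F c
  define D :: "'a set set \<Rightarrow> 'a set \<Rightarrow> real" where "D F c = real (\<Sum>e\<in>F. card (e \<inter> c))" for F c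
  have Lun: "L (F \<union> G) c = L F c + L G c" if "finite F" "finite G" "F \<inter> G = {}" for F G c
  proof -
    have "{e\<in>F \<union> G. e \<subseteq> c} = {e\<in>F. e \<subseteq> c} \<union> {e\<in>G. e \<subseteq> c}" by blast
    then show ?thesis unfolding L_def using that
      by (simp add: card_Un_disjoint disjoint_iff)
  qed
  have Dun: "D (F \<union> G) c = D F c + D G c" if "finite F" "finite G" "F \<inter> G = {}" for F G c
    unfolding D_def using that by (simp add: sum.union_disjoint)
  have Dsum: "(\<Sum>c\<in>C. D F c) = 2 * real (card F)" if "F \<subseteq> pairs V" for F
    unfolding D_def of_nat_sum[symmetric] D_sum[OF P V that] by simp
  have Lsum: "(\<Sum>c\<in>C. L F c) \<le> real (card F)" if "F \<subseteq> pairs V" for F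
    unfolding L_def of_nat_sum[symmetric] of_nat_le_iff by (rule L_sum_le[OF P V that])
  have Lnn: "L F c \<ge> 0" for F c unfolding L_def by simp
  have Dnn: "D F c \<ge> 0" for F c unfolding D_def by (rule of_nat_0_le_iff)
  have Dle: "D F c \<le> 2 * real (card F)" if "F \<subseteq> pairs V" "c \<in> C" for F c
  proof -
    have "D F c \<le> (\<Sum>c\<in>C. D F c)" by (rule member_le_sum[OF that(2) _ fC]) (simp add: Dnn)
    then show ?thesis using Dsum[OF that(1)] by simp
  qed
  have modF: "modularity F C = (\<Sum>c\<in>C. L F c / real m - (D F c / (2 * real m))^2)"
    if "F \<subseteq> pairs V" "card F = m" for F
  proof -
    have fF: "finite F" using V that(1) pairs_finite finite_subset by blast
    show ?thesis unfolding modularity_def L_def D_def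
      by (rule sum.cong[OF refl]) (simp add: deg_sum[OF fc fF] that(2))
  qed
  define W where "W c = D E c + D E' c" for c
  have Wb: "0 \<le> W c \<and> W c \<le> 4 * real m" if "c \<in> C" for c
    using Dle[OF E(1) that] Dle[OF E(2) that] Dnn[of E c] Dnn[of E' c] m unfolding W_def by simp
  have termeq: "(L E c / real m - (D E c / (2 * real m))^2) - (L E' c / real m - (D E' c / (2 * real m))^2)
      = (L R c - L A c) / real m - (D R c * W c - D A c * W c) / (4 * (real m)^2)" for c
  proof -
    have 1: "L E c = L K c + L R c" using Lun[OF fKRA(1,2) EKR(2)] EKR(1) by simp
    have 2: "L E' c = L K c + L A c" using Lun[OF fKRA(1,3) EKA(2)] EKA(1) by simp
    have 3: "D E c = D K c + D R c" using Dun[OF fKRA(1,2) EKR(2)] EKR(1) by simp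
    have 4: "D E' c = D K c + D A c" using Dun[OF fKRA(1,3) EKA(2)] EKA(1) by simp
    have mpos: "real m > 0" using m by simp
    show ?thesis unfolding W_def 1 2 3 4 by (rule alg_id[OF mpos])
  qed
  define x where "x = (\<Sum>c\<in>C. L R c) - (\<Sum>c\<in>C. L A c)"
  define y where "y = (\<Sum>c\<in>C. D R c * W c) - (\<Sum>c\<in>C. D A c * W c)"
  have diff: "modularity E C - modularity E' C = x / real m - y / (4 * (real m)^2)"
  proof -
    have "modularity E C - modularity E' C = (\<Sum>c\<in>C. (L E c / real m - (D E c / (2 * real m))^2) - (L E' c / real m - (D E' c / (2 * real m))^2))"
      unfolding modF[OF E(1) m(1)] modF[OF E(2) m(2)] by (rule sum_subtractf[symmetric])
    also have "\<dots> = (\<Sum>c\<in>C. (L R c - L A c) / real m - (D R c * W c - D A c * W c) / (4 * (real m)^2))"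
      by (rule sum.cong[OF refl termeq])
    also have "\<dots> = (\<Sum>c\<in>C. (L R c - L A c)) / real m - (\<Sum>c\<in>C. (D R c * W c - D A c * W c)) / (4 * (real m)^2)"
      by (simp only: sum_subtractf sum_divide_distrib[symmetric])
    also have "\<dots> = x / real m - y / (4 * (real m)^2)"
      unfolding x_def y_def by (simp only: sum_subtractf)
    finally show ?thesis .
  qed
  have xb: "\<bar>x\<bar> \<le> real r"
    using Lsum[OF RAsub(1)] Lsum[OF RAsub(2)] sum_nonneg[of C "L R", OF Lnn] sum_nonneg[of C "L A", OF Lnn]
      cardA unfolding x_def r_def by linarith
  have yb1: "0 \<le> (\<Sum>c\<in>C. D F c * W c) \<and> (\<Sum>c\<in>C. D F c * W c) \<le> 8 * real m * real (card F)"
    if "F \<subseteq> pairs V" for F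
  proof
    show "0 \<le> (\<Sum>c\<in>C. D F c * W c)" using Wb Dnn by (simp add: sum_nonneg)
    have "(\<Sum>c\<in>C. D F c * W c) \<le> (\<Sum>c\<in>C. D F c * (4 * real m))"
      by (rule sum_mono) (simp add: Wb Dnn mult_left_mono)
    also have "\<dots> = 4 * real m * (\<Sum>c\<in>C. D F c)" by (simp add: sum_distrib_right mult.commute)
    also have "\<dots> = 8 * real m * real (card F)" using Dsum[OF that] by simp
    finally show "(\<Sum>c\<in>C. D F c * W c) \<le> 8 * real m * real (card F)" .
  qed
  have yb: "\<bar>y\<bar> \<le> 8 * real m * real r"
    using yb1[OF RAsub(1), folded r_def] yb1[OF RAsub(2), unfolded cardA] unfolding y_def by linarith
  have mpos: "real m > 0" using m by simp
  have a1: "\<bar>x / real m - y / (4 * (real m)^2)\<bar> \<le> \<bar>x / real m\<bar> + \<bar>y / (4 * (real m)^2)\<bar>"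
    by (rule abs_triangle_ineq4)
  have a2: "\<bar>x / real m\<bar> \<le> real r / real m"
  proof -
    have "\<bar>x / real m\<bar> = \<bar>x\<bar> / real m" using mpos by (simp add: abs_divide)
    also have "\<dots> \<le> real r / real m" by (rule divide_right_mono[OF xb]) (use mpos in simp)
    finally show ?thesis .
  qed
  have a3: "\<bar>y / (4 * (real m)^2)\<bar> \<le> 2 * real r / real m"
  proof -
    have "\<bar>y / (4 * (real m)^2)\<bar> = \<bar>y\<bar> / (4 * (real m)^2)" using mpos by (simp add: abs_divide)
    also have "\<dots> \<le> (8 * real m * real r) / (4 * (real m)^2)" by (rule divide_right_mono[OF yb]) (use mpos in simp)
    also have "\<dots> = 2 * real r / real m" using mpos by (simp add: power2_eq_square)
    finally show ?thesis .
  qed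
  have a4: "real r / real m + 2 * real r / real m = 3 * real r / real m" by (simp add: add_divide_distrib[symmetric])
  have a5: "3 * real r / real m \<le> 3 * real t / real m" by (rule divide_right_mono) (use rt in simp_all)
  have "\<bar>x / real m - y / (4 * (real m)^2)\<bar> \<le> 3 * real t / real m"
    using a1 a2 a3 a4 a5 by linarith
  then show ?thesis unfolding diff .
qed


lemma aux_edges_sel:
  "aux_edges V k rk X = {e\<in>pairs V. pos (pair_sim k X) rk (pairs V) e < aux_size (card V)}"
  unfolding aux_edges_def pos_def beat_def by simp

lemma card_pairs: "finite V \<Longrightarrow> card (pairs V) = card V choose 2"
  unfolding pairs_def by (rule n_subsets)

lemma aux_size_le: "aux_size n \<le> n choose 2"
proof -
  have ev: "even (n * (n - 1))" by (cases "even n") auto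
  have "real (n * (n - 1)) / 20 \<le> real (n * (n - 1) div 2)"
    using ev by (simp add: real_of_nat_div)
  then have "\<lceil>real (n * (n - 1)) / 20\<rceil> \<le> int (n * (n - 1) div 2)"
    by (intro ceiling_le) simp
  then show ?thesis unfolding aux_size_def choose_two by (simp only: nat_le_iff)
qed

lemma aux_size_ge: "real (n * (n - 1)) / 20 \<le> real (aux_size n)"
proof -
  have "real (n * (n - 1)) / 20 \<le> of_int \<lceil>real (n * (n - 1)) / 20\<rceil>" by (rule le_of_int_ceiling)
  moreover have "\<lceil>real (n * (n - 1)) / 20\<rceil> \<ge> 0"
  proof -
    have x0: "0 \<le> real (n * (n - 1)) / 20" by simp
    show ?thesis using ceiling_mono[OF x0] by simp
  qed
  ultimately show ?thesis unfolding aux_size_def by simp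
qed

lemma pair_sim_agree:
  assumes "e \<in> pairs V" "\<forall>u\<in>e. X' u = X u"
  shows "pair_sim k X' e = pair_sim k X e"
proof -
  obtain a b where ab: "e = {a, b}" "a \<noteq> b" using pairs_card[OF assms(1)] card_2_iff by metis
  define u where "u = (SOME u. u \<in> e)"
  have u: "u \<in> e" unfolding u_def using ab by (metis insertI1 someI)
  define w where "w = (SOME w. w \<in> e \<and> w \<noteq> u)"
  have "\<exists>w. w \<in> e \<and> w \<noteq> u" using ab u by auto
  then have w: "w \<in> e" unfolding w_def by (metis (mono_tags, lifting) someI_ex)
  have "cos_sim k X' u w = cos_sim k X u w"
    unfolding cos_sim_def using assms(2) u w by simp
  then show ?thesis unfolding pair_sim_def Let_def u_def w_def .
qed

lemma card_star:
  assumes "finite V" "v \<in> V"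
  shows "card {e\<in>pairs V. v \<in> e} \<le> card V - 1"
proof -
  have "{e\<in>pairs V. v \<in> e} \<subseteq> (\<lambda>u. {v, u}) ` (V - {v})"
  proof
    fix e assume e: "e \<in> {e\<in>pairs V. v \<in> e}"
    then obtain a b where ab: "e = {a, b}" "a \<noteq> b" using pairs_card card_2_iff by (metis (no_types, lifting) mem_Collect_eq)
    have "e \<subseteq> V" using e pairs_sub by blast
    show "e \<in> (\<lambda>u. {v, u}) ` (V - {v})"
    proof (cases "a = v")
      case True
      then show ?thesis using ab \<open>e \<subseteq> V\<close> by auto
    next
      case False
      then have "b = v" using ab e by auto
      then show ?thesis using ab \<open>e \<subseteq> V\<close> False by auto
    qed
  qed
  then have "card {e\<in>pairs V. v \<in> e} \<le> card ((\<lambda>u. {v, u}) ` (V - {v}))"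
    using assms(1) by (intro card_mono) auto
  also have "\<dots> \<le> card (V - {v})" by (rule card_image_le) (use assms(1) in simp)
  also have "\<dots> = card V - 1" using assms by simp
  finally show ?thesis .
qed

lemma beat_agree: "s' e = s e \<Longrightarrow> s' f = s f \<Longrightarrow> beat s' rk e f = beat s rk e f"
  unfolding beat_def by simp

lemma swap_bound:
  fixes s s' :: "'a \<Rightarrow> real"
  assumes S: "finite S" "inj_on rk S" and mS: "m \<le> card S"
    and N: "\<forall>e\<in>S - T. s' e = s e" and T: "card (S \<inter> T) \<le> b"
  shows "card ({e\<in>S. pos s rk S e < m} - {e\<in>S. pos s' rk S e < m}) \<le> b"
proof -
  define A where "A = {e\<in>S. pos s rk S e < m}"
  define B where "B = {e\<in>S. pos s' rk S e < m}"
  have cA: "card A = m" unfolding A_def by (rule card_sel[OF S mS])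
  have cB: "card B = m" unfolding B_def by (rule card_sel[OF S mS])
  have fA: "finite A" "finite B" using S(1) unfolding A_def B_def by auto
  have cAB: "card (A - B) = card (B - A)"
    using cA cB fA by (simp add: card_Diff_subset_Int Int_commute)
  have fT: "finite (S \<inter> T)" using S(1) by simp
  have key: "(A - B) - T = {} \<or> (B - A) - T = {}"
  proof (rule ccontr)
    assume "\<not> ?thesis"
    then obtain e f where e: "e \<in> A" "e \<notin> B" "e \<notin> T" and f: "f \<in> B" "f \<notin> A" "f \<notin> T" by blast
    have eS: "e \<in> S" and fS: "f \<in> S" using e f unfolding A_def B_def by auto
    have "e \<noteq> f" using e f by blast
    have se: "s' e = s e" and sf: "s' f = s f" using N eS fS e f by auto
    have "beat s rk e f \<or> beat s rk f e" by (rule beat_total[OF S(2) eS fS \<open>e \<noteq> f\<close>])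
    then show False
    proof
      assume "beat s rk e f"
      then have "beat s' rk e f" using beat_agree[OF se sf] by simp
      then have "pos s' rk S e < m" using sel_down[OF S(1) fS eS] f unfolding B_def by blast
      then show False using e eS unfolding B_def by blast
    next
      assume "beat s rk f e"
      then have "pos s rk S f < m" using sel_down[OF S(1) eS fS] e unfolding A_def by blast
      then show False using f fS unfolding A_def by blast
    qed
  qed
  then show ?thesis
  proof
    assume "(A - B) - T = {}"
    then have "A - B \<subseteq> S \<inter> T" unfolding A_def by blast
    then have "card (A - B) \<le> card (S \<inter> T)" using fT by (rule card_mono[rotated])
    then show ?thesis using T unfolding A_def B_def by simp
  next
    assume "(B - A) - T = {}"
    then have "B - A \<subseteq> S \<inter> T" unfolding B_def by blast
    then have "card (B - A) \<le> card (S \<inter> T)" using fT by (rule card_mono[rotated])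
    then show ?thesis using T cAB unfolding A_def B_def by simp
  qed
qed


theorem proposition1:
  fixes V :: "'v set" and n k :: nat and rk :: "'v set \<Rightarrow> nat" and C :: "'v set set"
    and E :: "'v set set" and X :: "'v \<Rightarrow> nat \<Rightarrow> bool"
  assumes "finite V" and "card V = n" and "n \<ge> 2"
    and "inj_on rk (pairs V)"
    and "partition_on V C"
    and "attr_graph V k E X"
  shows "local_sensitivity (Q_aux V k rk C) (neighbouring V k) (E, X) \<le> 60 / real n"
proof -
  note V = assms(1) and cV = assms(2) and n2 = assms(3) and rkinj = assms(4) and P = assms(5)
    and G = assms(6)
  have fP: "finite (pairs V)" using V by (rule pairs_finite)
  have cP: "card (pairs V) = n choose 2" using card_pairs[OF V] cV by simp
  have mle: "aux_size n \<le> card (pairs V)" using cP aux_size_le by simp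
  have npos: "real n > 0" using n2 by simp
  have mge: "real (n * (n - 1)) / 20 \<le> real (aux_size n)" by (rule aux_size_ge)
  have nn1: "real (n * (n - 1)) > 0" using n2 by simp
  have mp0: "real (aux_size n) > 0" using mge nn1 by linarith
  then have mpos: "aux_size n > 0" by simp
  have card_aux: "card (aux_edges V k rk Y) = aux_size n" for Y
    unfolding aux_edges_sel cV by (rule card_sel[OF fP rkinj mle])
  have sub_aux: "aux_edges V k rk Y \<subseteq> pairs V" for Y
    unfolding aux_edges_def by blast
  have bound: "\<bar>Q_aux V k rk C (E, X) - Q_aux V k rk C G'\<bar> \<le> 60 / real n"
    if nb: "neighbouring V k (E, X) G'" for G'
  proof -
    obtain E' X' where G': "G' = (E', X')" by (cases G')
    have cases: "X' = X \<or> (\<exists>v\<in>V. X' v \<noteq> X v \<and> (\<forall>u. u \<noteq> v \<longrightarrow> X' u = X u))"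
      using nb unfolding neighbouring_def G' by auto
    then show ?thesis
    proof
      assume "X' = X"
      then show ?thesis unfolding G' Q_aux_def using npos by simp
    next
      assume "\<exists>v\<in>V. X' v \<noteq> X v \<and> (\<forall>u. u \<noteq> v \<longrightarrow> X' u = X u)"
      then obtain v where v: "v \<in> V" "\<forall>u. u \<noteq> v \<longrightarrow> X' u = X u" by blast
      define Ea where "Ea = aux_edges V k rk X"
      define Ea' where "Ea' = aux_edges V k rk X'"
      have agree: "\<forall>e\<in>pairs V - {e. v \<in> e}. pair_sim k X' e = pair_sim k X e"
      proof
        fix e assume e: "e \<in> pairs V - {e. v \<in> e}"
        then have "\<forall>u\<in>e. X' u = X u" using v(2) by auto
        then show "pair_sim k X' e = pair_sim k X e" using e pair_sim_agree by blast
      qed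
      have Tb: "card (pairs V \<inter> {e. v \<in> e}) \<le> n - 1"
      proof -
        have "pairs V \<inter> {e. v \<in> e} = {e\<in>pairs V. v \<in> e}" by blast
        then show ?thesis using card_star[OF V v(1)] cV by simp
      qed
      have dif: "card (Ea - Ea') \<le> n - 1"
        unfolding Ea_def Ea'_def aux_edges_sel cV
        by (rule swap_bound[OF fP rkinj mle agree Tb])
      have md: "\<bar>modularity Ea C - modularity Ea' C\<bar> \<le> 3 * real (n - 1) / real (aux_size n)"
        by (rule mod_diff[OF V P sub_aux sub_aux card_aux card_aux mpos dif[unfolded Ea_def Ea'_def],
              folded Ea_def Ea'_def])
      have h: "real n * real (n - 1) \<le> 20 * real (aux_size n)" using mge by simp
      have mp: "real (aux_size n) > 0" using mpos by simp
      have "3 * real (n - 1) / real (aux_size n) \<le> 60 / real n"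
        using h mp npos by (simp add: field_simps)
      then show ?thesis using md unfolding G' Q_aux_def Ea_def Ea'_def by simp
    qed
  qed
  have ne: "{\<bar>Q_aux V k rk C (E, X) - Q_aux V k rk C G'\<bar> | G'. neighbouring V k (E, X) G'} \<noteq> {}"
  proof -
    have "n choose 2 > 0" using n2 by simp
    then have "pairs V \<noteq> {}" using cP by auto
    then obtain e where e: "e \<in> pairs V" by blast
    define E' where "E' = (if e \<in> E then E - {e} else insert e E)"
    have sd: "(E - E') \<union> (E' - E) = {e}" unfolding E'_def by auto
    have aE': "attr_graph V k E' X" using G e unfolding attr_graph_def E'_def by auto
    have "neighbouring V k (E, X) (E', X)"
      unfolding neighbouring_def using G aE' sd by simp
    then show ?thesis by blast
  qed
  show ?thesis unfolding local_sensitivity_def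
    by (rule cSup_least[OF ne]) (use bound in blast)
qed

end
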